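(* Let $P$ be a non-abelian exponent-critical $p$-group of type $\mathcal{A}$, let $p^m=\exp(P)$, and let $A$ be a maximal subgroup of $P$ containing an element of order $p^m$. Then: (i) $A$ is abelian, normal in $P$, and contains all elements of $P$ of order $p^m$; (ii) $A\cong Z_{p^m}\times S$ for some group $S$ of exponent dividing $p^{m-1}$; (iii) $P'$ is abelian of exponent dividing $p^{m-1}$.
   Context: A finite group $G$ is exponent-critical if $\exp(G)$ is not the least common multiple of the exponents of the proper non-abelian subgroups of $G$. An exponent-critical $p$-group is of type $\mathcal{A}$ if it has exactly one abelian maximal subgroup. $Z_{p^m}$ denotes the cyclic group of order $p^m$. *)

theory Defs
  imports "HOL-Algebra.Algebra"
begin

definition group_exponent :: "('a, 'b) monoid_scheme \<Rightarrow> nat" where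
  "group_exponent G = Lcm (group.ord G ` carrier G)"

definition proper_nonabelian_subgroups :: "('a, 'b) monoid_scheme \<Rightarrow> 'a set set" where
  "proper_nonabelian_subgroups G =
     {H. subgroup H G \<and> H \<noteq> carrier G \<and> \<not> comm_group (subgroup_generated G H)}"

definition exponent_critical :: "('a, 'b) monoid_scheme \<Rightarrow> bool" where
  "exponent_critical G \<longleftrightarrow>
     group_exponent G \<noteq>
       Lcm ((\<lambda>H. group_exponent (subgroup_generated G H)) ` proper_nonabelian_subgroups G)"

definition maximal_subgroup :: "'a set \<Rightarrow> ('a, 'b) monoid_scheme \<Rightarrow> bool" where
  "maximal_subgroup H G \<longleftrightarrow> subgroup H G \<and> H \<noteq> carrier G \<and>
     (\<forall>K. subgroup K G \<and> H \<subseteq> K \<longrightarrow> K = H \<or> K = carrier G)"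

definition p_group :: "nat \<Rightarrow> ('a, 'b) monoid_scheme \<Rightarrow> bool" where
  "p_group p G \<longleftrightarrow> group G \<and> Factorial_Ring.prime p \<and> finite (carrier G) \<and> (\<exists>n. order G = p ^ n)"

definition type_A :: "('a, 'b) monoid_scheme \<Rightarrow> bool" where
  "type_A G \<longleftrightarrow> (\<exists>!H. maximal_subgroup H G \<and> comm_group (subgroup_generated G H))"

end

theory Submission
  imports Defs
begin

lemma (in group) finite_closed_subgroup:
  assumes fin: "finite (carrier G)" and S: "S \<subseteq> carrier G" "\<one> \<in> S"
    and cl: "\<And>x y. x \<in> S \<Longrightarrow> y \<in> S \<Longrightarrow> x \<otimes> y \<in> S"
  shows "subgroup S G"
proof
  fix x assume x: "x \<in> S"
  have pw: "x [^] (k::nat) \<in> S" for k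
    by (induction k) (auto simp: S(2) cl x)
  have xc: "x \<in> carrier G" using x S by auto
  have "ord x \<ge> 1" using ord_ge_1[OF fin xc] .
  then have "x [^] (ord x - 1) \<otimes> x = x [^] ord x"
    by (metis Suc_diff_le diff_Suc_1 nat_pow_Suc xc)
  also have "\<dots> = \<one>" using xc by simp
  finally have "inv x = x [^] (ord x - 1)"
    using xc by (intro inv_equality) auto
  then show "inv x \<in> S" using pw by simp
qed (use assms in auto)

lemma (in group) ord_ppow:
  assumes "finite (carrier G)" "Factorial_Ring.prime p" "order G = p ^ n" "x \<in> carrier G"
  shows "\<exists>k\<le>n. ord x = p ^ k"
  using ord_dvd_group_order[OF assms(4)] assms(2,3) divides_primepow_nat by auto

lemma step_exists: "Q (0::nat) \<Longrightarrow> \<not> Q k \<Longrightarrow> \<exists>j. Q j \<and> \<not> Q (Suc j)"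
  by (induction k) auto

lemma (in group) normalizer_grows:
  assumes fin: "finite (carrier G)" and p: "Factorial_Ring.prime p" and ordG: "order G = p ^ n"
    and H: "subgroup H G" "H \<noteq> carrier G"
  shows "\<exists>g\<in>carrier G - H. \<forall>h\<in>H. g \<otimes> h \<otimes> inv g \<in> H"
proof -
  define GH where "GH = subgroup_generated G H"
  have cGH: "carrier GH = H" using H(1) unfolding GH_def
    by (simp add: subgroup.carrier_subgroup_generated_subgroup)
  have gGH: "group GH" unfolding GH_def by simp
  have mGH: "x \<otimes>\<^bsub>GH\<^esub> y = x \<otimes> y" for x y unfolding GH_def by simp
  have Hc: "H \<subseteq> carrier G" using H(1) subgroup.subset by blast
  define E where "E = rcosets H"
  define \<phi> where "\<phi> = (\<lambda>h. \<lambda>C\<in>E. C #> inv h)"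
  have cosc: "C \<in> E \<Longrightarrow> C \<subseteq> carrier G" for C
    unfolding E_def using H(1) is_group subgroup.rcosets_carrier by blast
  have cosE: "C \<in> E \<Longrightarrow> x \<in> carrier G \<Longrightarrow> C #> x \<in> E" for C x
  proof -
    assume "C \<in> E" "x \<in> carrier G"
    then obtain g where g: "g \<in> carrier G" "C = H #> g" unfolding E_def RCOSETS_def by auto
    then have "C #> x = H #> (g \<otimes> x)" using Hc \<open>x \<in> carrier G\<close> by (simp add: coset_mult_assoc)
    then show ?thesis unfolding E_def using g \<open>x \<in> carrier G\<close> Hc by (simp add: rcosetsI)
  qed
  have bk1: "C \<in> E \<Longrightarrow> x \<in> carrier G \<Longrightarrow> (C #> x) #> inv x = C" for C x
    using cosc by (simp add: coset_mult_assoc)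
  have bk2: "C \<in> E \<Longrightarrow> x \<in> carrier G \<Longrightarrow> (C #> inv x) #> x = C" for C x
    using cosc by (simp add: coset_mult_assoc)
  have bij: "\<phi> h \<in> Bij E" if h: "h \<in> H" for h
  proof -
    have hc: "h \<in> carrier G" using h Hc by auto
    have "bij_betw (\<lambda>C. C #> inv h) E E"
      by (rule bij_betw_byWitness[where f'="\<lambda>C. C #> h"]) (use hc bk1 bk2 cosE in auto)
    then have "bij_betw (\<phi> h) E E"
      unfolding \<phi>_def by (rule bij_betw_cong[THEN iffD1, rotated]) auto
    then show ?thesis unfolding Bij_def \<phi>_def by auto
  qed
  have hom: "\<phi> \<in> hom GH (BijGroup E)"
  proof (rule homI)
    fix x assume "x \<in> carrier GH" then show "\<phi> x \<in> carrier (BijGroup E)"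
      using bij cGH by (simp add: BijGroup_def)
  next
    fix x y assume xy: "x \<in> carrier GH" "y \<in> carrier GH"
    then have xyc: "x \<in> carrier G" "y \<in> carrier G" using cGH Hc by auto
    have "\<phi> (x \<otimes> y) = compose E (\<phi> x) (\<phi> y)"
    proof
      fix C show "\<phi> (x \<otimes> y) C = compose E (\<phi> x) (\<phi> y) C"
      proof (cases "C \<in> E")
        case True
        have iy: "inv y \<in> carrier G" "inv x \<in> carrier G" using xyc by auto
        have e1: "C #> inv y \<in> E" using cosE[OF True iy(1)] .
        have "(C #> inv y) #> inv x = C #> (inv y \<otimes> inv x)"
          using coset_mult_assoc[OF cosc[OF True] iy(1) iy(2)] .
        also have "\<dots> = C #> inv (x \<otimes> y)" using xyc by (simp add: inv_mult_group)
        finally have "(C #> inv y) #> inv x = C #> inv (x \<otimes> y)" .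
        then show ?thesis unfolding \<phi>_def compose_def using True e1 by simp
      next
        case False
        then show ?thesis unfolding \<phi>_def compose_def by simp
      qed
    qed
    then show "\<phi> (x \<otimes>\<^bsub>GH\<^esub> y) = \<phi> x \<otimes>\<^bsub>BijGroup E\<^esub> \<phi> y"
      using bij xy cGH by (simp add: mGH BijGroup_def)
  qed
  interpret ga: group_action GH E \<phi>
    unfolding group_action_def group_hom_def group_hom_axioms_def
    using gGH group_BijGroup hom by auto
  have finH: "finite H" using fin Hc finite_subset by blast
  have finE: "finite E" unfolding E_def
    by (meson fin finite_Pow_iff finite_subset rcosets_subset_PowG H(1))
  have lag: "card E * card H = p ^ n" using lagrange[OF H(1)] ordG E_def by simp
  have "card H < card (carrier G)"
    using H Hc fin by (meson psubsetI psubset_card_mono)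
  then have "card E \<noteq> 1" using lag ordG unfolding order_def by auto
  moreover have "card E dvd p ^ n" using lag by (metis dvd_triv_left)
  then obtain i where i: "card E = p ^ i" using p divides_primepow_nat by auto
  ultimately have "i \<noteq> 0" by auto
  then have pE: "p dvd card E" using i by (simp add: dvd_power)
  have cHd: "card H dvd p ^ n" using lag by (metis dvd_triv_right)
  have orbdvd: "card (orbit GH \<phi> C) = 1 \<or> p dvd card (orbit GH \<phi> C)" if "C \<in> E" for C
  proof -
    have "card (orbit GH \<phi> C) * card (stabilizer GH \<phi> C) = card H"
      using ga.orbit_stabilizer_theorem[OF that] cGH by (simp add: order_def)
    then have "card (orbit GH \<phi> C) dvd p ^ n" using cHd by (metis dvd_mult_left dvd_trans) 
    then obtain i where "card (orbit GH \<phi> C) = p ^ i" using p divides_primepow_nat by auto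
    then show ?thesis by (cases i) auto
  qed
  define Ob where "Ob = orbits GH E \<phi>"
  have finO: "finite Ob" unfolding Ob_def orbits_def using finE by simp
  have sumE: "(\<Sum>orb\<in>Ob. card orb) = card E"
    using ga.disjoint_sum[OF finE, of "\<lambda>_. 1::nat"] unfolding Ob_def by simp
  define Ob1 where "Ob1 = {orb\<in>Ob. card orb = 1}"
  have "(\<Sum>orb\<in>Ob. card orb) = (\<Sum>orb\<in>Ob - Ob1. card orb) + (\<Sum>orb\<in>Ob1. card orb)"
    by (rule sum.subset_diff) (auto simp: Ob1_def finO)
  moreover have "(\<Sum>orb\<in>Ob1. card orb) = card Ob1" unfolding Ob1_def by simp
  moreover have "p dvd (\<Sum>orb\<in>Ob - Ob1. card orb)"
    by (rule dvd_sum) (use orbdvd in \<open>auto simp: Ob1_def Ob_def orbits_def\<close>)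
  ultimately have pO1: "p dvd card Ob1" using sumE pE by (metis dvd_add_right_iff)
  have HE: "H \<in> E" unfolding E_def using H(1) is_group subgroup.subgroup_in_rcosets by blast
  have orbH: "orbit GH \<phi> H = {H}"
  proof -
    have "\<phi> g H = H" if "g \<in> H" for g
      unfolding \<phi>_def using HE that H(1) Hc by (simp add: coset_join2 subgroup.m_inv_closed subsetD)
    moreover have "\<one> \<in> H" using H(1) subgroup.one_closed by blast
    ultimately show ?thesis unfolding orbit_def cGH by blast
  qed
  have "{H} \<in> Ob" unfolding Ob_def orbits_def using orbH HE by blast
  then have "{H} \<in> Ob1" unfolding Ob1_def by simp
  then have "card Ob1 \<noteq> 0" using finO Ob1_def by auto
  moreover have "p \<le> card Ob1" using pO1 \<open>card Ob1 \<noteq> 0\<close> by (simp add: dvd_imp_le)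
  ultimately have c2: "card Ob1 \<ge> 2" using prime_ge_2_nat[OF p] by linarith
  have "\<exists>Xo\<in>Ob1. Xo \<noteq> {H}"
  proof (rule ccontr)
    assume "\<not> ?thesis"
    then have "Ob1 \<subseteq> {{H}}" by blast
    then have "card Ob1 \<le> 1" using card_mono[of "{{H}}" Ob1] by simp
    then show False using c2 by linarith
  qed
  then obtain Xo where Xo: "Xo \<in> Ob1" "Xo \<noteq> {H}" by blast
  then obtain C where C: "C \<in> E" "Xo = orbit GH \<phi> C" "card Xo = 1" unfolding Ob1_def Ob_def orbits_def by auto
  have "C \<in> Xo" using C ga.orbit_refl by auto
  then have XoC: "Xo = {C}" using C(3) by (metis card_1_singletonE singletonD)
  have fixC: "C #> inv h = C" if "h \<in> H" for h
  proof -
    have "\<phi> h C \<in> Xo" using C(2) that cGH unfolding orbit_def by auto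
    then show ?thesis using XoC C(1) unfolding \<phi>_def by auto
  qed
  obtain g where g: "g \<in> carrier G" "C = H #> g" using C(1) unfolding E_def RCOSETS_def by auto
  have "g \<notin> H" using g Xo XoC coset_join2 H(1) by auto
  moreover have "g \<otimes> h \<otimes> inv g \<in> H" if h: "h \<in> H" for h
  proof -
    have hc: "h \<in> carrier G" using h Hc by auto
    have "C #> inv (inv h) = C" using fixC h H(1) by (simp add: subgroup.m_inv_closed)
    then have "H #> (g \<otimes> h) = H #> g" using g hc Hc by (simp add: coset_mult_assoc)
    then have "g \<otimes> h \<in> H #> g" using rcos_self[of "g \<otimes> h" H] H(1) g hc by auto
    then show ?thesis using subgroup.rcos_module_imp[OF H(1) is_group g(1)] by blast
  qed
  ultimately show ?thesis using g by blast
qed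

lemma (in group) inv_cancel_assoc [simp]:
  "x \<in> carrier G \<Longrightarrow> y \<in> carrier G \<Longrightarrow> inv x \<otimes> (x \<otimes> y) = y"
  "x \<in> carrier G \<Longrightarrow> y \<in> carrier G \<Longrightarrow> x \<otimes> (inv x \<otimes> y) = y"
  by (simp_all add: m_assoc[symmetric])

lemma (in group) maximal_is_normal:
  assumes fin: "finite (carrier G)" and p: "Factorial_Ring.prime p" and ordG: "order G = p ^ n"
    and M: "maximal_subgroup M G"
  shows "M \<lhd> G"
proof -
  have Ms: "subgroup M G" "M \<noteq> carrier G" using M unfolding maximal_subgroup_def by auto
  have Mc: "M \<subseteq> carrier G" using Ms subgroup.subset by blast
  obtain g where g: "g \<in> carrier G - M" "\<forall>h\<in>M. g \<otimes> h \<otimes> inv g \<in> M"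
    using normalizer_grows[OF fin p ordG Ms] by blast
  define N where "N = {x \<in> carrier G. \<forall>h\<in>M. x \<otimes> h \<otimes> inv x \<in> M}"
  have sN: "subgroup N G"
  proof (rule finite_closed_subgroup[OF fin])
    show "N \<subseteq> carrier G" unfolding N_def by auto
    show "\<one> \<in> N" unfolding N_def using Mc by auto
    fix x y assume xy: "x \<in> N" "y \<in> N"
    then have xyc: "x \<in> carrier G" "y \<in> carrier G" unfolding N_def by auto
    have "x \<otimes> y \<otimes> h \<otimes> inv (x \<otimes> y) \<in> M" if h: "h \<in> M" for h
    proof -
      have hc: "h \<in> carrier G" using h Mc by auto
      have "x \<otimes> y \<otimes> h \<otimes> inv (x \<otimes> y) = x \<otimes> (y \<otimes> h \<otimes> inv y) \<otimes> inv x"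
        using xyc hc by (simp add: m_assoc inv_mult_group)
      moreover have "y \<otimes> h \<otimes> inv y \<in> M" using xy h unfolding N_def by auto
      ultimately show ?thesis using xy unfolding N_def by auto
    qed
    then show "x \<otimes> y \<in> N" unfolding N_def using xyc by auto
  qed
  have "M \<subseteq> N" unfolding N_def using Ms(1) Mc
    by (auto simp: subgroup.m_closed subgroup.m_inv_closed)
  moreover have "g \<in> N" "g \<notin> M" using g unfolding N_def by auto
  ultimately have "N = carrier G" using M sN unfolding maximal_subgroup_def by blast
  then have "carrier G \<subseteq> N" by simp
  then show ?thesis using Ms(1) unfolding normal_inv_iff N_def by blast
qed

lemma (in group) nmod_mult:
  assumes "M \<lhd> G" "a \<in> carrier G" "b \<in> carrier G" "c \<in> carrier G" "d \<in> carrier G"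
    "a \<otimes> inv b \<in> M" "c \<otimes> inv d \<in> M"
  shows "(a \<otimes> c) \<otimes> inv (b \<otimes> d) \<in> M"
proof -
  have "(a \<otimes> c) \<otimes> inv (b \<otimes> d) = (a \<otimes> inv b) \<otimes> (b \<otimes> (c \<otimes> inv d) \<otimes> inv b)"
    using assms(2-5) by (simp add: m_assoc inv_mult_group)
  moreover have "b \<otimes> (c \<otimes> inv d) \<otimes> inv b \<in> M"
    using assms(1,3,7) normal_inv_iff by blast
  ultimately show ?thesis using assms(1,6) normal_imp_subgroup subgroup.m_closed by metis
qed

lemma (in group) nmod_pow:
  assumes "M \<lhd> G" "a \<in> carrier G" "b \<in> carrier G" "a \<otimes> inv b \<in> M"
  shows "a [^] (k::nat) \<otimes> inv (b [^] k) \<in> M"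
proof (induction k)
  case 0
  then show ?case using assms(1) normal_imp_subgroup subgroup.one_closed by fastforce
next
  case (Suc k)
  then show ?case using nmod_mult[OF assms(1) _ _ assms(2,3) _ assms(4)] assms(2,3)
    by (simp add: nat_pow_Suc)
qed

lemma (in group) nmod_trans:
  assumes "M \<lhd> G" "a \<in> carrier G" "b \<in> carrier G" "c \<in> carrier G"
    "a \<otimes> inv b \<in> M" "b \<otimes> inv c \<in> M"
  shows "a \<otimes> inv c \<in> M"
proof -
  have "a \<otimes> inv c = (a \<otimes> inv b) \<otimes> (b \<otimes> inv c)" using assms(2-4) by (simp add: m_assoc)
  then show ?thesis using assms(1,5,6) normal_imp_subgroup subgroup.m_closed by metis
qed

lemma (in group) nmod_sym:
  assumes "M \<lhd> G" "a \<in> carrier G" "b \<in> carrier G" "a \<otimes> inv b \<in> M"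
  shows "b \<otimes> inv a \<in> M"
proof -
  have "b \<otimes> inv a = inv (a \<otimes> inv b)" using assms(2,3) by (simp add: inv_mult_group)
  then show ?thesis using assms(1,4) normal_imp_subgroup subgroup.m_inv_closed by metis
qed

lemma (in group) maximal_cyclic_quot:
  assumes fin: "finite (carrier G)" and p: "Factorial_Ring.prime p" and ordG: "order G = p ^ n"
    and M: "maximal_subgroup M G" and y: "y \<in> carrier G" "y \<notin> M" and g: "g \<in> carrier G"
  shows "\<exists>r::nat. g \<otimes> inv (y [^] r) \<in> M"
proof -
  have Ms: "subgroup M G" using M unfolding maximal_subgroup_def by auto
  have Mc: "M \<subseteq> carrier G" using Ms subgroup.subset by blast
  have nM: "M \<lhd> G" using maximal_is_normal[OF fin p ordG M] .
  define K where "K = {x \<in> carrier G. \<exists>r::nat. x \<otimes> inv (y [^] r) \<in> M}"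
  have sK: "subgroup K G"
  proof (rule finite_closed_subgroup[OF fin])
    show "K \<subseteq> carrier G" unfolding K_def by auto
    show "\<one> \<in> K" unfolding K_def using Ms(1) subgroup.one_closed
      by (auto intro!: exI[of _ 0])
    fix a b assume ab: "a \<in> K" "b \<in> K"
    have abc: "a \<in> carrier G" "b \<in> carrier G" using ab unfolding K_def by auto
    obtain r s :: nat where rs: "a \<otimes> inv (y [^] r) \<in> M" "b \<otimes> inv (y [^] s) \<in> M"
      using ab unfolding K_def by auto
    have "(a \<otimes> b) \<otimes> inv (y [^] r \<otimes> y [^] s) \<in> M"
      by (rule nmod_mult[OF nM abc(1) _ abc(2) _ rs]) (use y in auto)
    then have "(a \<otimes> b) \<otimes> inv (y [^] (r + s)) \<in> M" using y by (simp add: nat_pow_mult)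
    then show "a \<otimes> b \<in> K" unfolding K_def using abc by auto
  qed
  have "M \<subseteq> K" unfolding K_def using Mc by (auto intro!: exI[of _ 0])
  moreover have "y \<in> K" unfolding K_def using y Ms(1) subgroup.one_closed
    by (auto intro!: exI[of _ 1])
  ultimately have "K = carrier G" using M sK y unfolding maximal_subgroup_def by blast
  then show ?thesis using g unfolding K_def by auto
qed

lemma (in group) maximal_derived:
  assumes fin: "finite (carrier G)" and p: "Factorial_Ring.prime p" and ordG: "order G = p ^ n"
    and M: "maximal_subgroup M G"
  shows "derived G (carrier G) \<subseteq> M"
proof -
  have Ms: "subgroup M G" "M \<noteq> carrier G" using M unfolding maximal_subgroup_def by auto
  have Mc: "M \<subseteq> carrier G" using Ms subgroup.subset by blast
  have nM: "M \<lhd> G" using maximal_is_normal[OF fin p ordG M] .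
  obtain y where y: "y \<in> carrier G" "y \<notin> M" using Ms Mc by blast
  have "x \<otimes> z \<otimes> inv x \<otimes> inv z \<in> M" if xz: "x \<in> carrier G" "z \<in> carrier G" for x z
  proof -
    obtain r :: nat where r: "x \<otimes> inv (y [^] r) \<in> M" using maximal_cyclic_quot[OF fin p ordG M y xz(1)] by blast
    obtain s :: nat where s: "z \<otimes> inv (y [^] s) \<in> M" using maximal_cyclic_quot[OF fin p ordG M y xz(2)] by blast
    have 1: "(x \<otimes> z) \<otimes> inv (y [^] r \<otimes> y [^] s) \<in> M"
      by (rule nmod_mult[OF nM xz(1) _ xz(2) _ r s]) (use y in auto)
    have 2: "(z \<otimes> x) \<otimes> inv (y [^] s \<otimes> y [^] r) \<in> M"
      by (rule nmod_mult[OF nM xz(2) _ xz(1) _ s r]) (use y in auto)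
    have e: "y [^] s \<otimes> y [^] r = y [^] r \<otimes> y [^] s" using y by (simp add: nat_pow_mult add.commute)
    have 3: "y [^] r \<otimes> y [^] s \<otimes> inv (z \<otimes> x) \<in> M"
      using nmod_sym[OF nM _ _ 2] xz y e by simp
    have "(x \<otimes> z) \<otimes> inv (z \<otimes> x) \<in> M"
      by (rule nmod_trans[OF nM _ _ _ 1 3]) (use xz y in auto)
    then show ?thesis using xz by (simp add: inv_mult_group m_assoc)
  qed
  then have "derived_set G (carrier G) \<subseteq> M" by blast
  then show ?thesis unfolding derived_def using Ms(1) generate_subgroup_incl by blast
qed

lemma (in group) maximal_pow_p:
  assumes fin: "finite (carrier G)" and p: "Factorial_Ring.prime p" and ordG: "order G = p ^ n"
    and M: "maximal_subgroup M G" and g: "g \<in> carrier G"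
  shows "g [^] p \<in> M"
proof -
  have Ms: "subgroup M G" "M \<noteq> carrier G" using M unfolding maximal_subgroup_def by auto
  have Mc: "M \<subseteq> carrier G" using Ms subgroup.subset by blast
  have nM: "M \<lhd> G" using maximal_is_normal[OF fin p ordG M] .
  obtain g0 where g0: "g0 \<in> carrier G" "g0 \<notin> M" using Ms Mc by blast
  obtain k where k: "ord g0 = p ^ k" using ord_ppow[OF fin p ordG g0(1)] by blast
  have "\<exists>j. g0 [^] (p ^ j) \<notin> M \<and> \<not> g0 [^] (p ^ Suc j) \<notin> M"
  proof (rule step_exists[where k=k])
    show "g0 [^] p ^ 0 \<notin> M" using g0 by simp
    have "g0 [^] p ^ k = \<one>" using pow_ord_eq_1[OF g0(1)] k by simp
    then show "\<not> g0 [^] p ^ k \<notin> M" using Ms(1) subgroup.one_closed by simp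
  qed
  then obtain j where j: "g0 [^] (p ^ j) \<notin> M" "g0 [^] (p ^ j * p) \<in> M"
    by (auto simp: mult.commute)
  define y where "y = g0 [^] (p ^ j)"
  have y: "y \<in> carrier G" "y \<notin> M" "y [^] p \<in> M" using j g0 unfolding y_def by (auto simp: nat_pow_pow)
  obtain r :: nat where r: "g \<otimes> inv (y [^] r) \<in> M" using maximal_cyclic_quot[OF fin p ordG M y(1,2) g] by blast
  have "g [^] p \<otimes> inv ((y [^] r) [^] p) \<in> M" using nmod_pow[OF nM g _ r] y by simp
  moreover have "(y [^] r) [^] p = (y [^] p) [^] r" using y by (simp add: nat_pow_pow mult.commute)
  moreover have "(y [^] p) [^] r \<in> M" using y(3) Ms(1)
    by (induction r) (auto simp: subgroup.one_closed subgroup.m_closed nat_pow_Suc)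
  ultimately have 1: "g [^] p \<otimes> inv ((y [^] p) [^] r) \<in> M" and 2: "(y [^] p) [^] r \<in> M" by auto
  have zc: "(y [^] p) [^] r \<in> carrier G" using y by simp
  have "g [^] p = (g [^] p \<otimes> inv ((y [^] p) [^] r)) \<otimes> (y [^] p) [^] r"
    using zc g by (simp add: m_assoc)
  then show ?thesis using 1 2 Ms(1) subgroup.m_closed by metis
qed

lemma (in group) subgroup_pow_closed:
  assumes "subgroup K G" "x \<in> K" shows "x [^] (n::nat) \<in> K"
  using assms by (induction n) (auto simp: subgroup.one_closed subgroup.m_closed nat_pow_Suc)

lemma (in group) coprime_pow_in:
  assumes K: "subgroup K G" and y: "y \<in> carrier G" and r: "y [^] r \<in> K" "r \<noteq> 0"
    and q: "y [^] (q::nat) \<in> K" and cop: "coprime r q"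
  shows "y \<in> K"
proof -
  obtain u v :: nat where uv: "r * u = q * v + gcd r q" using bezout_nat[OF r(2)] by blast
  then have uv1: "r * u = q * v + 1" using cop by simp
  have "y [^] (r * u) = y [^] (q * v) \<otimes> y" using y uv1 by (simp add: nat_pow_mult)
  then have "y = inv (y [^] (q * v)) \<otimes> y [^] (r * u)" using y by simp
  moreover have "y [^] (r * u) \<in> K" using subgroup_pow_closed[OF K r(1), of u] y by (simp add: nat_pow_pow)
  moreover have "y [^] (q * v) \<in> K" using subgroup_pow_closed[OF K q, of v] y by (simp add: nat_pow_pow)
  ultimately show ?thesis using K by (metis subgroup.m_closed subgroup.m_inv_closed)
qed

lemma (in comm_group) complement_exists:
  assumes fin: "finite (carrier G)" and p: "Factorial_Ring.prime p" and ordG: "order G = p ^ n"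
    and a: "a \<in> carrier G" and expa: "\<forall>x\<in>carrier G. x [^] ord a = \<one>"
  shows "\<exists>C. subgroup C G \<and> (\<forall>t::nat. a [^] t \<in> C \<longrightarrow> a [^] t = \<one>) \<and>
             (\<forall>z\<in>carrier G. \<exists>t::nat. \<exists>c\<in>C. z = a [^] t \<otimes> c)"
proof -
  define F where "F = {C. subgroup C G \<and> (\<forall>t::nat. a [^] t \<in> C \<longrightarrow> a [^] t = \<one>)}"
  have finF: "finite F"
  proof -
    have "F \<subseteq> Pow (carrier G)" unfolding F_def using subgroup.subset by blast
    then show ?thesis using fin finite_subset by blast
  qed
  have "{\<one>} \<in> F" unfolding F_def using triv_subgroup by auto
  then have "card ` F \<noteq> {}" by blast
  define mx where "mx = Max (card ` F)"
  obtain C where CF: "C \<in> F" "card C = mx"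
    using Max_in[OF finite_imageI[OF finF] \<open>card ` F \<noteq> {}\<close>] unfolding mx_def by auto
  have Cmax: "card C' \<le> card C" if "C' \<in> F" for C'
    using Max_ge[OF finite_imageI[OF finF]] that CF(2) unfolding mx_def by auto
  have Cs: "subgroup C G" and CTI: "\<And>t::nat. a [^] t \<in> C \<Longrightarrow> a [^] t = \<one>"
    using CF(1) unfolding F_def by auto
  have Cc: "C \<subseteq> carrier G" using Cs subgroup.subset by blast
  define K where "K = {a [^] (t::nat) \<otimes> c | t c. c \<in> C}"
  have Kc: "K \<subseteq> carrier G" unfolding K_def using Cc a by auto
  have sK: "subgroup K G"
  proof (rule finite_closed_subgroup[OF fin Kc])
    have "\<one> = a [^] (0::nat) \<otimes> \<one>" by simp
    then show "\<one> \<in> K" unfolding K_def using subgroup.one_closed[OF Cs] by blast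
    fix x y assume xK: "x \<in> K" and yK: "y \<in> K"
    obtain t :: nat and c where tc1: "x = a [^] t \<otimes> c" "c \<in> C"
      using xK unfolding K_def by blast
    obtain s :: nat and d where tc2: "y = a [^] s \<otimes> d" "d \<in> C"
      using yK unfolding K_def by blast
    note tc = tc1 tc2
    have cd: "c \<in> carrier G" "d \<in> carrier G" using tc Cc by auto
    have "x \<otimes> y = (a [^] t \<otimes> a [^] s) \<otimes> (c \<otimes> d)"
      using tc cd a by (simp add: m_ac)
    also have "\<dots> = a [^] (t + s) \<otimes> (c \<otimes> d)" by (simp only: nat_pow_mult[OF a])
    finally have "x \<otimes> y = a [^] (t + s) \<otimes> (c \<otimes> d)" .
    moreover have "c \<otimes> d \<in> C" by (rule subgroup.m_closed[OF Cs tc(2) tc(4)])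
    ultimately show "x \<otimes> y \<in> K" unfolding K_def
      by (intro CollectI exI[of _ "t + s"] exI[of _ "c \<otimes> d"] conjI)
  qed
  have CK: "C \<subseteq> K"
  proof
    fix c assume c: "c \<in> C"
    then have "c = a [^] (0::nat) \<otimes> c" using Cc by auto
    then show "c \<in> K" unfolding K_def using c by blast
  qed
  have aK: "a [^] (t::nat) \<in> K" for t
  proof -
    have "a [^] t = a [^] t \<otimes> \<one>" using a by simp
    then show ?thesis unfolding K_def using subgroup.one_closed[OF Cs] by blast
  qed
  have "carrier G \<subseteq> K"
  proof (rule ccontr)
    assume "\<not> carrier G \<subseteq> K"
    then obtain z where z: "z \<in> carrier G" "z \<notin> K" by blast
    obtain k where k: "ord z = p ^ k" using ord_ppow[OF fin p ordG z(1)] by blast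
    have "\<exists>j. z [^] (p ^ j) \<notin> K \<and> \<not> z [^] (p ^ Suc j) \<notin> K"
    proof (rule step_exists[where k=k])
      show "z [^] p ^ 0 \<notin> K" using z by simp
      have "z [^] p ^ k = \<one>" using pow_ord_eq_1[OF z(1)] k by simp
      then show "\<not> z [^] p ^ k \<notin> K" using subgroup.one_closed[OF sK] by simp
    qed
    then obtain j where j: "z [^] (p ^ j) \<notin> K" "z [^] (p ^ j * p) \<in> K"
      by (auto simp: mult.commute)
    define x where "x = z [^] (p ^ j)"
    have x: "x \<in> carrier G" "x \<notin> K" "x [^] p \<in> K" using j z unfolding x_def by (auto simp: nat_pow_pow)
    obtain s c where sc: "x [^] p = a [^] (s::nat) \<otimes> c" "c \<in> C" using x(3) unfolding K_def by auto
    have cc: "c \<in> carrier G" using sc Cc by auto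
    obtain e where e: "ord a = p ^ e" using ord_ppow[OF fin p ordG a] by blast
    have "e \<noteq> 0"
    proof
      assume "e = 0"
      then have "z [^] (1::nat) = \<one>" using expa z e by simp
      then have "z = \<one>" using z by simp
      then have "z \<in> K" using aK[of 0] by simp
      then show False using z by simp
    qed
    define f where "f = p ^ (e - 1)"
    have pf: "p * f = ord a" using e \<open>e \<noteq> 0\<close> unfolding f_def by (simp add: power_eq_if)
    have "(x [^] p) [^] f = \<one>" using expa x(1) pf by (simp add: nat_pow_pow)
    then have "a [^] (s * f) \<otimes> c [^] f = \<one>" using sc a cc by (simp add: pow_mult_distrib m_comm nat_pow_pow)
    then have "a [^] (s * f) = inv (c [^] f)" using a cc by (simp add: inv_equality)
    also have "\<dots> \<in> C" by (rule subgroup.m_inv_closed[OF Cs subgroup_pow_closed[OF Cs sc(2)]])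
    finally have "a [^] (s * f) = \<one>" using CTI by blast
    then have "ord a dvd s * f" using a pow_eq_id by blast
    then have "p * f dvd s * f" using pf by simp
    moreover have "f > 0" unfolding f_def using prime_gt_0_nat[OF p] by simp
    ultimately have "p dvd s" by simp
    then obtain s' where s': "s = p * s'" by blast
    define y where "y = x \<otimes> inv (a [^] s')"
    have yc: "y \<in> carrier G" using x a unfolding y_def by simp
    have "y [^] p = x [^] p \<otimes> inv (a [^] s') [^] p" unfolding y_def using x a
      by (simp add: pow_mult_distrib m_comm)
    also have "\<dots> = a [^] s \<otimes> c \<otimes> inv (a [^] s)" using sc s' a
      by (simp add: nat_pow_inv nat_pow_pow mult.commute)
    also have "\<dots> = c" using a cc by (simp add: m_ac)
    finally have yp: "y [^] p = c" .
    have yK: "y \<notin> K"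
    proof
      assume "y \<in> K"
      then have "y \<otimes> a [^] s' \<in> K" by (rule subgroup.m_closed[OF sK _ aK])
      moreover have "y \<otimes> a [^] s' = x" unfolding y_def using x a by (simp add: m_assoc)
      ultimately show False using x by simp
    qed
    define C' where "C' = {c' \<otimes> y [^] (i::nat) | c' i. c' \<in> C}"
    have C'c: "C' \<subseteq> carrier G" unfolding C'_def using Cc yc by auto
    have sC': "subgroup C' G"
    proof (rule finite_closed_subgroup[OF fin C'c])
      have "\<one> = \<one> \<otimes> y [^] (0::nat)" by simp
      then show "\<one> \<in> C'" unfolding C'_def using subgroup.one_closed[OF Cs] by blast
      fix u v assume "u \<in> C'" "v \<in> C'"
      then obtain c1 i c2 l where tc: "u = c1 \<otimes> y [^] (i::nat)" "c1 \<in> C" "v = c2 \<otimes> y [^] (l::nat)" "c2 \<in> C"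
        unfolding C'_def by auto
      have cd: "c1 \<in> carrier G" "c2 \<in> carrier G" using tc Cc by auto
      have "u \<otimes> v = (c1 \<otimes> c2) \<otimes> y [^] (i + l)"
        using tc cd yc by (simp add: nat_pow_mult m_ac)
      moreover have "c1 \<otimes> c2 \<in> C" by (rule subgroup.m_closed[OF Cs tc(2) tc(4)])
      ultimately show "u \<otimes> v \<in> C'" unfolding C'_def
        by (intro CollectI exI[of _ "c1 \<otimes> c2"] exI[of _ "i + l"] conjI)
    qed
    have TI': "a [^] t = \<one>" if at: "a [^] (t::nat) \<in> C'" for t
    proof -
      obtain c' i where ci: "a [^] t = c' \<otimes> y [^] (i::nat)" "c' \<in> C" using at unfolding C'_def by auto
      have c'c: "c' \<in> carrier G" using ci Cc by auto
      have e1: "p * (i div p) + i mod p = i" by simp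
      have "y [^] (p * (i div p)) \<otimes> y [^] (i mod p) = y [^] (p * (i div p) + i mod p)"
        by (rule nat_pow_mult[OF yc])
      then have e2: "y [^] (p * (i div p)) \<otimes> y [^] (i mod p) = y [^] i" by (simp only: e1)
      have e3: "y [^] (p * (i div p)) = c [^] (i div p)"
        using nat_pow_pow[OF yc, of p "i div p"] yp by simp
      have yi: "y [^] i = c [^] (i div p) \<otimes> y [^] (i mod p)" using e2 e3 by simp
      have cq: "c' \<otimes> c [^] (i div p) \<in> C" by (rule subgroup.m_closed[OF Cs ci(2) subgroup_pow_closed[OF Cs sc(2)]])
      have cqc: "c' \<otimes> c [^] (i div p) \<in> carrier G" using cq Cc by auto
      have eq: "a [^] t = (c' \<otimes> c [^] (i div p)) \<otimes> y [^] (i mod p)"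
        using ci yi c'c cc yc by (simp add: m_assoc)
      show ?thesis
      proof (cases "i mod p = 0")
        case True
        then have "a [^] t \<in> C" using eq cq cqc by simp
        then show ?thesis using CTI by blast
      next
        case False
        have "y [^] (i mod p) = inv (c' \<otimes> c [^] (i div p)) \<otimes> a [^] t"
          using eq cqc yc a by (simp add: m_assoc[symmetric])
        moreover have "inv (c' \<otimes> c [^] (i div p)) \<in> K" by (rule subgroup.m_inv_closed[OF sK subsetD[OF CK cq]])
        ultimately have "y [^] (i mod p) \<in> K" using subgroup.m_closed[OF sK _ aK] by simp
        moreover have "y [^] p \<in> K" using yp sc CK by auto
        moreover have "coprime (i mod p) p"
        proof -
          have "\<not> p dvd (i mod p)" using False p
            by (metis mod_less_divisor dvd_imp_le neq0_conv not_le prime_gt_0_nat)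
          then have "coprime p (i mod p)" by (rule prime_imp_coprime[OF p])
          then show ?thesis by (simp add: coprime_commute)
        qed
        ultimately have "y \<in> K" using coprime_pow_in[OF sK yc _ False] by blast
        then show ?thesis using yK by simp
      qed
    qed
    have "C' \<in> F" unfolding F_def using sC' TI' by auto
    moreover have "C \<subset> C'"
    proof
      show "C \<subseteq> C'"
      proof
        fix c assume c: "c \<in> C"
        then have "c = c \<otimes> y [^] (0::nat)" using Cc by auto
        then show "c \<in> C'" unfolding C'_def using c by blast
      qed
      have "y = \<one> \<otimes> y [^] (1::nat)" using yc by simp
      then have "y \<in> C'" unfolding C'_def using subgroup.one_closed[OF Cs] by blast
      moreover have "y \<notin> C" using yK CK by auto
      ultimately show "C \<noteq> C'" by auto
    qed
    moreover have "finite C'" using C'c fin finite_subset by blast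
    ultimately have "card C < card C'" by (simp add: psubset_card_mono)
    then show False using Cmax[OF \<open>C' \<in> F\<close>] by simp
  qed
  then show ?thesis using Cs CTI unfolding K_def by blast
qed

lemma ord_sg:
  assumes "group G"
  shows "group.ord (subgroup_generated G H) x = group.ord G x"
proof -
  interpret G: group G by fact
  have g2: "group (subgroup_generated G H)" by simp
  show ?thesis
    unfolding group.ord_def[OF g2] group.ord_def[OF assms]
    by (simp add: pow_subgroup_generated)
qed

lemma exp_sg:
  assumes "group G" "subgroup H G"
  shows "group_exponent (subgroup_generated G H) = Lcm (group.ord G ` H)"
  unfolding group_exponent_def using ord_sg[OF assms(1)] assms
  by (simp add: subgroup.carrier_subgroup_generated_subgroup)

lemma (in group) ord_dvd_exp:
  "x \<in> carrier G \<Longrightarrow> ord x dvd group_exponent G"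
  unfolding group_exponent_def by (rule dvd_Lcm) simp

lemma (in group) crit:
  assumes ec: "exponent_critical G" and e: "group_exponent G = p ^ m"
    and H: "subgroup H G" "H \<noteq> carrier G" and x: "x \<in> H" "ord x = p ^ m"
  shows "comm_group (subgroup_generated G H)"
proof (rule ccontr)
  assume nc: "\<not> comm_group (subgroup_generated G H)"
  let ?L = "(\<lambda>H. group_exponent (subgroup_generated G H)) ` proper_nonabelian_subgroups G"
  have Hin: "H \<in> proper_nonabelian_subgroups G" unfolding proper_nonabelian_subgroups_def using H nc by auto
  have dv: "group_exponent (subgroup_generated G K) dvd p ^ m" if "subgroup K G" for K
    unfolding exp_sg[OF is_group that] e[symmetric]
    by (rule Lcm_least) (auto intro: ord_dvd_exp dest: subsetD[OF subgroup.subset[OF that]])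
  have "p ^ m dvd group_exponent (subgroup_generated G H)"
    unfolding exp_sg[OF is_group H(1)] using x by (metis dvd_Lcm imageI)
  then have eH: "group_exponent (subgroup_generated G H) = p ^ m" using dv[OF H(1)] by (simp add: dvd_antisym)
  have "Lcm ?L dvd p ^ m"
    by (rule Lcm_least) (use dv in \<open>auto simp: proper_nonabelian_subgroups_def\<close>)
  moreover have "p ^ m dvd Lcm ?L" using Hin eH by (metis dvd_Lcm imageI)
  ultimately have "Lcm ?L = group_exponent G" using e by (simp add: dvd_antisym)
  then show False using ec unfolding exponent_critical_def by simp
qed

lemma (in group) maxext:
  assumes fin: "finite (carrier G)" and K: "subgroup K G" "K \<noteq> carrier G"
  shows "\<exists>M. maximal_subgroup M G \<and> K \<subseteq> M"
  using K
proof (induction "card (carrier G) - card K" arbitrary: K rule: less_induct)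
  case less
  show ?case
  proof (cases "maximal_subgroup K G")
    case True then show ?thesis by blast
  next
    case False
    then obtain K' where K': "subgroup K' G" "K \<subseteq> K'" "K' \<noteq> K" "K' \<noteq> carrier G"
      using less.prems unfolding maximal_subgroup_def by blast
    have fK': "finite K'" by (rule finite_subset[OF subgroup.subset[OF K'(1)] fin])
    have "card K < card K'" using K' fK' by (simp add: psubset_card_mono)
    moreover have "card K' \<le> card (carrier G)" by (rule card_mono[OF fin subgroup.subset[OF K'(1)]])
    ultimately have "card (carrier G) - card K' < card (carrier G) - card K" by linarith
    then obtain M where "maximal_subgroup M G" "K' \<subseteq> M" using less.hyps K'(1,4) by blast
    then show ?thesis using K'(2) by blast
  qed
qed

lemma (in group) noncyclic:
  assumes "\<not> comm_group G" "x \<in> carrier G"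
  shows "generate G {x} \<noteq> carrier G"
proof
  assume eq: "generate G {x} = carrier G"
  have "comm_group G"
  proof (rule group_comm_groupI)
    fix u v assume uv: "u \<in> carrier G" "v \<in> carrier G"
    have gp: "carrier G = { x [^] (k :: int) | k. k \<in> UNIV }" using eq generate_pow[OF assms(2)] by simp
    obtain i :: int where "u = x [^] i" using uv(1) gp by blast
    moreover obtain j :: int where "v = x [^] j" using uv(2) gp by blast
    ultimately show "u \<otimes> v = v \<otimes> u" using assms(2) int_pow_mult[OF assms(2), of i j] int_pow_mult[OF assms(2), of j i] by (simp add: add.commute)
  qed
  then show False using assms(1) by simp
qed

lemma (in group) ord_not_top:
  assumes fin: "finite (carrier G)" and p: "Factorial_Ring.prime p" and ordG: "order G = p ^ n"
    and e: "group_exponent G = p ^ m" and x: "x \<in> carrier G" "ord x \<noteq> p ^ m"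
  shows "x [^] (p ^ (m - 1)) = \<one>"
proof -
  obtain j where j: "ord x = p ^ j" using ord_ppow[OF fin p ordG x(1)] by blast
  have "p ^ j dvd p ^ m" using ord_dvd_exp[OF x(1)] e j by simp
  then have "j \<le> m" using p using power_dvd_imp_le prime_gt_1_nat by blast
  then have "j \<le> m - 1" using x(2) j by (cases "j = m") auto
  then have "ord x dvd p ^ (m - 1)" using j by (simp add: le_imp_power_dvd)
  then show ?thesis using x(1) pow_eq_id by blast
qed

theorem mainTheorem12:
  fixes P :: "('a, 'b) monoid_scheme" and p m :: nat and A :: "'a set"
  assumes "p_group p P"
    and "\<not> comm_group P"
    and "exponent_critical P"
    and "type_A P"
    and "group_exponent P = p ^ m"
    and "maximal_subgroup A P"
    and "\<exists>x\<in>A. group.ord P x = p ^ m"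
  shows "(comm_group (subgroup_generated P A) \<and> A \<lhd> P \<and>
         (\<forall>x\<in>carrier P. group.ord P x = p ^ m \<longrightarrow> x \<in> A)) \<and>
         (\<exists>S :: 'a monoid. group S \<and> group_exponent S dvd p ^ (m - 1) \<and>
           subgroup_generated P A \<cong> integer_mod_group (p ^ m) \<times>\<times> S) \<and>
         (comm_group (subgroup_generated P (derived P (carrier P))) \<and>
         group_exponent (subgroup_generated P (derived P (carrier P))) dvd p ^ (m - 1))"
proof -
  have grp: "group P" and p: "Factorial_Ring.prime p" and fin: "finite (carrier P)"
    and "\<exists>n. order P = p ^ n" using assms(1) unfolding p_group_def by auto
  then obtain n where ordP: "order P = p ^ n" by blast
  interpret P: group P by (rule grp)
  note ec = assms(3) and e = assms(5)
  have As: "subgroup A P" "A \<noteq> carrier P" using assms(6) unfolding maximal_subgroup_def by auto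
  have Ac: "A \<subseteq> carrier P" by (rule subgroup.subset[OF As(1)])
  obtain a where a: "a \<in> A" "P.ord a = p ^ m" using assms(7) by blast
  have ac: "a \<in> carrier P" using a Ac by auto
  have Acomm: "comm_group (subgroup_generated P A)" by (rule P.crit[OF ec e As a])
  have Anorm: "A \<lhd> P" by (rule P.maximal_is_normal[OF fin p ordP assms(6)])
  have uniq: "H = A" if "maximal_subgroup H P" "comm_group (subgroup_generated P H)" for H
  proof -
    obtain H0 where H0: "\<And>H. maximal_subgroup H P \<and> comm_group (subgroup_generated P H) \<Longrightarrow> H = H0"
      using assms(4) unfolding type_A_def by blast
    have "H = H0" using H0 that by blast
    moreover have "A = H0" using H0 assms(6) Acomm by blast
    ultimately show ?thesis by simp
  qed
  have allA: "\<forall>x\<in>carrier P. P.ord x = p ^ m \<longrightarrow> x \<in> A"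
  proof (intro ballI impI)
    fix x assume x: "x \<in> carrier P" "P.ord x = p ^ m"
    have K: "subgroup (generate P {x}) P" using P.generate_is_subgroup x by simp
    have Kne: "generate P {x} \<noteq> carrier P" by (rule P.noncyclic[OF assms(2) x(1)])
    obtain M where M: "maximal_subgroup M P" "generate P {x} \<subseteq> M" using P.maxext[OF fin K Kne] by blast
    have "x \<in> generate P {x}" by (rule generate.incl) simp
    then have xM: "x \<in> M" using M(2) by blast
    have Ms: "subgroup M P" "M \<noteq> carrier P" using M(1) unfolding maximal_subgroup_def by auto
    have "comm_group (subgroup_generated P M)" by (rule P.crit[OF ec e Ms xM x(2)])
    then have "M = A" using uniq M(1) by blast
    then show "x \<in> A" using xM by simp
  qed
  obtain x0 where x0: "x0 \<in> carrier P" "x0 \<notin> A" using As Ac by blast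
  have K0: "subgroup (generate P {x0}) P" using P.generate_is_subgroup x0 by simp
  have K0ne: "generate P {x0} \<noteq> carrier P" by (rule P.noncyclic[OF assms(2) x0(1)])
  obtain M0 where M0: "maximal_subgroup M0 P" "generate P {x0} \<subseteq> M0" using P.maxext[OF fin K0 K0ne] by blast
  have "x0 \<in> generate P {x0}" by (rule generate.incl) simp
  then have x0M: "x0 \<in> M0" using M0(2) by blast
  have M0s: "subgroup M0 P" "M0 \<noteq> carrier P" using M0(1) unfolding maximal_subgroup_def by auto
  have M0c: "M0 \<subseteq> carrier P" by (rule subgroup.subset[OF M0s(1)])
  have M0nc: "\<not> comm_group (subgroup_generated P M0)" using uniq M0(1) x0 x0M by blast
  have M0ord: "P.ord z \<noteq> p ^ m" if "z \<in> M0" for z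
    using P.crit[OF ec e M0s that] M0nc by blast
  have M0exp: "z [^]\<^bsub>P\<^esub> (p ^ (m - 1)) = \<one>\<^bsub>P\<^esub>" if "z \<in> M0" for z
    using P.ord_not_top[OF fin p ordP e _ M0ord[OF that]] that M0c by blast
  have aM0: "a \<notin> M0" using M0ord a(2) by blast
  have Pcomm: "x \<otimes>\<^bsub>P\<^esub> y = y \<otimes>\<^bsub>P\<^esub> x" if "x \<in> A" "y \<in> A" for x y
  proof -
    interpret AG: comm_group "subgroup_generated P A" by (rule Acomm)
    have "x \<otimes>\<^bsub>subgroup_generated P A\<^esub> y = y \<otimes>\<^bsub>subgroup_generated P A\<^esub> x"
      by (rule AG.m_comm) (simp_all add: subgroup.carrier_subgroup_generated_subgroup[OF As(1)] that)
    then show ?thesis by simp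
  qed
  define D where "D = derived P (carrier P)"
  have DA: "D \<subseteq> A" unfolding D_def by (rule P.maximal_derived[OF fin p ordP assms(6)])
  have DM: "D \<subseteq> M0" unfolding D_def by (rule P.maximal_derived[OF fin p ordP M0(1)])
  have Ds: "subgroup D P" unfolding D_def by (rule P.derived_is_subgroup) simp
  have iii1: "comm_group (subgroup_generated P D)"
  proof (rule group.group_comm_groupI)
    show "group (subgroup_generated P D)" by simp
    fix x y assume "x \<in> carrier (subgroup_generated P D)" "y \<in> carrier (subgroup_generated P D)"
    then have "x \<in> A" "y \<in> A" using DA by (auto simp: subgroup.carrier_subgroup_generated_subgroup[OF Ds])
    then show "x \<otimes>\<^bsub>subgroup_generated P D\<^esub> y = y \<otimes>\<^bsub>subgroup_generated P D\<^esub> x"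
      using Pcomm by simp
  qed
  have iii2: "group_exponent (subgroup_generated P D) dvd p ^ (m - 1)"
    unfolding exp_sg[OF grp Ds]
  proof (rule Lcm_least)
    fix b assume "b \<in> P.ord ` D"
    then obtain z where z: "z \<in> D" "b = P.ord z" by blast
    have "z \<in> M0" using z DM by blast
    then show "b dvd p ^ (m - 1)" using M0exp P.pow_eq_id M0c z by blast
  qed
  define A' where "A' = subgroup_generated P A"
  interpret AG: comm_group A' unfolding A'_def by (rule Acomm)
  have cA': "carrier A' = A" unfolding A'_def by (rule subgroup.carrier_subgroup_generated_subgroup[OF As(1)])
  have mA': "x \<otimes>\<^bsub>A'\<^esub> y = x \<otimes>\<^bsub>P\<^esub> y" for x y unfolding A'_def by simp
  have oA': "\<one>\<^bsub>A'\<^esub> = \<one>\<^bsub>P\<^esub>" unfolding A'_def by simp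
  have pA': "x [^]\<^bsub>A'\<^esub> (k::nat) = x [^]\<^bsub>P\<^esub> k" for x k unfolding A'_def by (simp add: pow_subgroup_generated)
  have ordA': "AG.ord x = P.ord x" for x unfolding A'_def by (rule ord_sg[OF grp])
  have finA: "finite A" using Ac fin finite_subset by blast
  have "card (rcosets\<^bsub>P\<^esub> A) * card A = p ^ n" using P.lagrange[OF As(1)] ordP by simp
  then have "card A dvd p ^ n" by (metis dvd_triv_right)
  then obtain k where k: "card A = p ^ k" using p divides_primepow_nat by auto
  have ordAG: "order A' = p ^ k" unfolding order_def cA' by (rule k)
  have finAG: "finite (carrier A')" unfolding cA' by (rule finA)
  have aA': "a \<in> carrier A'" using a cA' by simp
  have expa: "\<forall>x\<in>carrier A'. x [^]\<^bsub>A'\<^esub> AG.ord a = \<one>\<^bsub>A'\<^esub>"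
  proof
    fix x assume "x \<in> carrier A'"
    then have xc: "x \<in> carrier P" using cA' Ac by auto
    have "P.ord x dvd p ^ m" using P.ord_dvd_exp[OF xc] e by simp
    then have "x [^]\<^bsub>P\<^esub> (p ^ m) = \<one>\<^bsub>P\<^esub>" using P.pow_eq_id[OF xc] by simp
    then show "x [^]\<^bsub>A'\<^esub> AG.ord a = \<one>\<^bsub>A'\<^esub>" using ordA' a(2) pA' oA' by simp
  qed
  obtain C where Cs: "subgroup C A'" and CTI: "\<forall>t::nat. a [^]\<^bsub>A'\<^esub> t \<in> C \<longrightarrow> a [^]\<^bsub>A'\<^esub> t = \<one>\<^bsub>A'\<^esub>"
    and Cdec: "\<forall>z\<in>carrier A'. \<exists>t::nat. \<exists>c\<in>C. z = a [^]\<^bsub>A'\<^esub> t \<otimes>\<^bsub>A'\<^esub> c"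
    using AG.complement_exists[OF finAG p ordAG aA' expa] by blast
  have CsP: "subgroup C P" using Cs unfolding A'_def P.subgroup_subgroup_generated_iff by blast
  have CA: "C \<subseteq> A" using subgroup.subset[OF Cs] cA' by simp
  have Cc: "C \<subseteq> carrier P" using CA Ac by blast
  have CTIP: "a [^]\<^bsub>P\<^esub> t = \<one>\<^bsub>P\<^esub>" if "a [^]\<^bsub>P\<^esub> (t::nat) \<in> C" for t
    using CTI that pA' oA' by metis
  define S :: "'a monoid" where "S = \<lparr>carrier = C, monoid.mult = monoid.mult P, one = \<one>\<^bsub>P\<^esub>\<rparr>"
  have cS: "carrier S = C" and mS: "x \<otimes>\<^bsub>S\<^esub> y = x \<otimes>\<^bsub>P\<^esub> y" and oS: "\<one>\<^bsub>S\<^esub> = \<one>\<^bsub>P\<^esub>" for x y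
    unfolding S_def by simp_all
  have gS: "group S"
  proof (rule groupI)
    fix x y assume "x \<in> carrier S" "y \<in> carrier S"
    then show "x \<otimes>\<^bsub>S\<^esub> y \<in> carrier S" using subgroup.m_closed[OF CsP] cS mS by simp
  next
    show "\<one>\<^bsub>S\<^esub> \<in> carrier S" using subgroup.one_closed[OF CsP] cS oS by simp
  next
    fix x y z assume "x \<in> carrier S" "y \<in> carrier S" "z \<in> carrier S"
    then have "x \<in> carrier P" "y \<in> carrier P" "z \<in> carrier P" using Cc unfolding cS by auto
    then show "x \<otimes>\<^bsub>S\<^esub> y \<otimes>\<^bsub>S\<^esub> z = x \<otimes>\<^bsub>S\<^esub> (y \<otimes>\<^bsub>S\<^esub> z)"
      by (simp add: mS P.m_assoc)
  next
    fix x assume "x \<in> carrier S"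
    then have "x \<in> carrier P" using Cc unfolding cS by auto
    then show "\<one>\<^bsub>S\<^esub> \<otimes>\<^bsub>S\<^esub> x = x" by (simp add: mS oS)
  next
    fix x assume x: "x \<in> carrier S"
    then have "inv\<^bsub>P\<^esub> x \<in> carrier S" using subgroup.m_inv_closed[OF CsP] cS by simp
    moreover have "x \<in> carrier P" using x Cc unfolding cS by auto
    then have "inv\<^bsub>P\<^esub> x \<otimes>\<^bsub>S\<^esub> x = \<one>\<^bsub>S\<^esub>" by (simp add: mS oS)
    ultimately show "\<exists>y\<in>carrier S. y \<otimes>\<^bsub>S\<^esub> x = \<one>\<^bsub>S\<^esub>" by blast
  qed
  have pS: "x [^]\<^bsub>S\<^esub> (k::nat) = x [^]\<^bsub>P\<^esub> k" for x k
    by (induction k) (simp_all add: mS oS)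
  have ordS: "group.ord S x = P.ord x" for x
    unfolding group.ord_def[OF gS] group.ord_def[OF grp] pS oS ..
  have Cexp: "c [^]\<^bsub>P\<^esub> (p ^ (m - 1)) = \<one>\<^bsub>P\<^esub>" if c: "c \<in> C" for c
  proof -
    define N where "N = p ^ (m - 1)"
    have cc: "c \<in> carrier P" "c \<in> A" using c Cc CA by auto
    obtain r :: nat where r: "c \<otimes>\<^bsub>P\<^esub> inv\<^bsub>P\<^esub> (a [^]\<^bsub>P\<^esub> r) \<in> M0"
      using P.maximal_cyclic_quot[OF fin p ordP M0(1) ac aM0 cc(1)] by blast
    have arA: "a [^]\<^bsub>P\<^esub> r \<in> A" using P.subgroup_pow_closed[OF As(1) a(1)] .
    have iarA: "inv\<^bsub>P\<^esub> (a [^]\<^bsub>P\<^esub> r) \<in> A" using subgroup.m_inv_closed[OF As(1) arA] .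
    have arc: "a [^]\<^bsub>P\<^esub> r \<in> carrier P" using ac by simp
    have "(c \<otimes>\<^bsub>P\<^esub> inv\<^bsub>P\<^esub> (a [^]\<^bsub>P\<^esub> r)) [^]\<^bsub>P\<^esub> N = \<one>\<^bsub>P\<^esub>"
      using M0exp[OF r] unfolding N_def .
    moreover have "(c \<otimes>\<^bsub>P\<^esub> inv\<^bsub>P\<^esub> (a [^]\<^bsub>P\<^esub> r)) [^]\<^bsub>P\<^esub> N
        = c [^]\<^bsub>P\<^esub> N \<otimes>\<^bsub>P\<^esub> (inv\<^bsub>P\<^esub> (a [^]\<^bsub>P\<^esub> r)) [^]\<^bsub>P\<^esub> N"
      by (rule P.pow_mult_distrib[OF Pcomm[OF cc(2) iarA] cc(1)]) (use arc in simp)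
    moreover have "(inv\<^bsub>P\<^esub> (a [^]\<^bsub>P\<^esub> r)) [^]\<^bsub>P\<^esub> N = inv\<^bsub>P\<^esub> (a [^]\<^bsub>P\<^esub> (r * N))"
      using ac by (simp add: P.nat_pow_inv P.nat_pow_pow)
    ultimately have eq1: "c [^]\<^bsub>P\<^esub> N \<otimes>\<^bsub>P\<^esub> inv\<^bsub>P\<^esub> (a [^]\<^bsub>P\<^esub> (r * N)) = \<one>\<^bsub>P\<^esub>" by simp
    have c1: "c [^]\<^bsub>P\<^esub> N \<in> carrier P" "a [^]\<^bsub>P\<^esub> (r * N) \<in> carrier P" using cc ac by simp_all
    have eq2: "c [^]\<^bsub>P\<^esub> N = a [^]\<^bsub>P\<^esub> (r * N)"
      using eq1 c1 by (metis P.inv_closed P.inv_equality P.inv_inv)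
    have "c [^]\<^bsub>P\<^esub> N \<in> C" by (rule P.subgroup_pow_closed[OF CsP c])
    then have "a [^]\<^bsub>P\<^esub> (r * N) = \<one>\<^bsub>P\<^esub>" using CTIP eq2 by simp
    then show ?thesis using eq2 unfolding N_def by simp
  qed
  have expS: "group_exponent S dvd p ^ (m - 1)"
    unfolding group_exponent_def cS
  proof (rule Lcm_least)
    fix b assume "b \<in> group.ord S ` C"
    then obtain c where c: "c \<in> C" "b = group.ord S c" by blast
    have "P.ord c dvd p ^ (m - 1)" using Cexp[OF c(1)] P.pow_eq_id Cc c(1) by blast
    then show "b dvd p ^ (m - 1)" using c(2) ordS by simp
  qed
  define nn where "nn = p ^ m"
  have nn0: "nn \<noteq> 0" unfolding nn_def using p by (simp add: prime_gt_0_nat)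
  define Z where "Z = integer_mod_group nn"
  have cZ: "carrier Z = {0..<int nn}" unfolding Z_def using nn0 by (simp add: carrier_integer_mod_group)
  have gZ: "group Z" unfolding Z_def by simp
  have gZS: "group (Z \<times>\<times> S)" by (rule DirProd_group[OF gZ gS])
  define f where "f = (\<lambda>(i::int, c). a [^]\<^bsub>A'\<^esub> i \<otimes>\<^bsub>A'\<^esub> c)"
  have ordaA: "AG.ord a = nn" using ordA' a(2) unfolding nn_def by simp
  have CA': "c \<in> carrier A'" if "c \<in> C" for c using that CA cA' by auto
  have powmod: "a [^]\<^bsub>A'\<^esub> (i mod int nn) = a [^]\<^bsub>A'\<^esub> i" for i :: int
    using AG.int_pow_eq[OF aA'] ordaA by (simp add: dvd_minus_mod)
  have hom: "f \<in> hom (Z \<times>\<times> S) A'"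
  proof (rule homI)
    fix x assume "x \<in> carrier (Z \<times>\<times> S)"
    then obtain i c where "x = (i, c)" "c \<in> C" using cS by auto
    then show "f x \<in> carrier A'" unfolding f_def using aA' CA' by simp
  next
    fix x y assume xy: "x \<in> carrier (Z \<times>\<times> S)" "y \<in> carrier (Z \<times>\<times> S)"
    then obtain i c j d where ij: "x = (i, c)" "c \<in> C" "y = (j, d)" "d \<in> C" using cS by auto
    have cd: "c \<in> carrier A'" "d \<in> carrier A'" using ij CA' by auto
    have "x \<otimes>\<^bsub>Z \<times>\<times> S\<^esub> y = ((i + j) mod int nn, c \<otimes>\<^bsub>A'\<^esub> d)"
      using ij unfolding Z_def by (simp add: mS mA')
    then have "f (x \<otimes>\<^bsub>Z \<times>\<times> S\<^esub> y) = a [^]\<^bsub>A'\<^esub> (i + j) \<otimes>\<^bsub>A'\<^esub> (c \<otimes>\<^bsub>A'\<^esub> d)"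
      unfolding f_def by (simp add: powmod)
    also have "\<dots> = (a [^]\<^bsub>A'\<^esub> i \<otimes>\<^bsub>A'\<^esub> a [^]\<^bsub>A'\<^esub> j) \<otimes>\<^bsub>A'\<^esub> (c \<otimes>\<^bsub>A'\<^esub> d)"
      by (simp only: AG.int_pow_mult[OF aA'])
    also have "\<dots> = (a [^]\<^bsub>A'\<^esub> i \<otimes>\<^bsub>A'\<^esub> c) \<otimes>\<^bsub>A'\<^esub> (a [^]\<^bsub>A'\<^esub> j \<otimes>\<^bsub>A'\<^esub> d)"
      using aA' cd by (simp add: AG.m_ac)
    also have "\<dots> = f x \<otimes>\<^bsub>A'\<^esub> f y" unfolding f_def using ij by simp
    finally show "f (x \<otimes>\<^bsub>Z \<times>\<times> S\<^esub> y) = f x \<otimes>\<^bsub>A'\<^esub> f y" .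
  qed
  interpret fh: group_hom "Z \<times>\<times> S" A' f
    unfolding group_hom_def group_hom_axioms_def using gZS AG.is_group hom by blast
  have "f \<in> iso (Z \<times>\<times> S) A'"
  proof (subst fh.iso_iff, intro conjI ballI impI subsetI)
    fix z assume z: "z \<in> carrier A'"
    obtain t :: nat and c where tc: "c \<in> C" "z = a [^]\<^bsub>A'\<^esub> t \<otimes>\<^bsub>A'\<^esub> c" using Cdec z by blast
    define i where "i = int t mod int nn"
    have i: "i \<in> carrier Z" unfolding cZ i_def using nn0 by simp
    have "a [^]\<^bsub>A'\<^esub> i = a [^]\<^bsub>A'\<^esub> t" unfolding i_def powmod by (simp add: int_pow_int)
    then have "f (i, c) = z" unfolding f_def using tc by simp
    moreover have "(i, c) \<in> carrier (Z \<times>\<times> S)" using i tc cS by simp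
    ultimately show "z \<in> f ` carrier (Z \<times>\<times> S)" by force
  next
    fix x assume x: "x \<in> carrier (Z \<times>\<times> S)" and fx: "f x = \<one>\<^bsub>A'\<^esub>"
    obtain i c where ic: "x = (i, c)" "i \<in> carrier Z" "c \<in> C" using x cS by auto
    have i0: "0 \<le> i" "i < int nn" using ic(2) cZ by auto
    have cc: "c \<in> carrier A'" using CA' ic by simp
    have "a [^]\<^bsub>A'\<^esub> i \<otimes>\<^bsub>A'\<^esub> c = \<one>\<^bsub>A'\<^esub>" using fx ic unfolding f_def by simp
    then have e1: "a [^]\<^bsub>A'\<^esub> i = inv\<^bsub>A'\<^esub> c" using aA' cc by (metis AG.int_pow_closed AG.inv_equality AG.inv_inv AG.inv_closed)
    have "inv\<^bsub>A'\<^esub> c \<in> C" using subgroup.m_inv_closed[OF Cs ic(3)] .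
    moreover have "a [^]\<^bsub>A'\<^esub> i = a [^]\<^bsub>A'\<^esub> (nat i)" using i0 int_pow_int[of A' a "nat i"] by simp
    ultimately have "a [^]\<^bsub>A'\<^esub> (nat i) \<in> C" using e1 by simp
    then have "a [^]\<^bsub>A'\<^esub> (nat i) = \<one>\<^bsub>A'\<^esub>" using CTI by blast
    then have "nn dvd nat i" using AG.pow_eq_id[OF aA'] ordaA by simp
    then have "nat i = 0" using i0 by (metis dvd_imp_le nat_less_iff neq0_conv not_le)
    then have ii: "i = 0" using i0 by simp
    then have "c = \<one>\<^bsub>A'\<^esub>" using \<open>a [^]\<^bsub>A'\<^esub> i \<otimes>\<^bsub>A'\<^esub> c = \<one>\<^bsub>A'\<^esub>\<close> cc by simp
    then show "x = \<one>\<^bsub>Z \<times>\<times> S\<^esub>" using ic ii oA' oS unfolding Z_def by simp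
  qed
  then have "Z \<times>\<times> S \<cong> A'" by (rule is_isoI)
  then have "A' \<cong> Z \<times>\<times> S" by (rule group.iso_sym[OF gZS])
  then have ii: "\<exists>S :: 'a monoid. group S \<and> group_exponent S dvd p ^ (m - 1) \<and>
           subgroup_generated P A \<cong> integer_mod_group (p ^ m) \<times>\<times> S"
    using gS expS unfolding A'_def Z_def nn_def by blast
  show ?thesis using Acomm Anorm allA ii iii1 iii2 unfolding D_def by blast
qed


end
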